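(* Let $G$ be a graph on $n$ vertices with at least two vertex-disjoint edges. If $k \ge \min\{n-1, \Gamma(G)+\gamma(G)\}$, then $D_k(G)$ is connected.
   Context: All graphs are finite and simple. A set $S \subseteq V(G)$ is a dominating set of $G$ if every vertex of $V(G)\setminus S$ is adjacent to a vertex of $S$; it is a minimal dominating set if no proper subset of it is a dominating set. $\gamma(G)$ is the minimum cardinality of a dominating set of $G$, and $\Gamma(G)$ is the maximum cardinality of a minimal dominating set of $G$. For an integer $k \ge \gamma(G)$, the $k$-dominating graph $D_k(G)$ is the graph whose vertices are the dominating sets of $G$ of cardinality at most $k$, with two such sets $A,B$ adjacent if and only if their symmetric difference $(A\setminus B)\cup(B\setminus A)$ consists of exactly one vertex of $G$. *)

theory Defs
  imports Main
begin

definition simple_graph :: "'a set \<Rightarrow> ('a \<Rightarrow> 'a \<Rightarrow> bool) \<Rightarrow> bool" where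
  "simple_graph V E \<longleftrightarrow> finite V \<and>
     (\<forall>u v. E u v \<longrightarrow> u \<in> V \<and> v \<in> V \<and> u \<noteq> v \<and> E v u)"

definition dominating_set :: "'a set \<Rightarrow> ('a \<Rightarrow> 'a \<Rightarrow> bool) \<Rightarrow> 'a set \<Rightarrow> bool" where
  "dominating_set V E S \<longleftrightarrow> S \<subseteq> V \<and> (\<forall>v \<in> V - S. \<exists>u \<in> S. E v u)"

definition minimal_dominating_set :: "'a set \<Rightarrow> ('a \<Rightarrow> 'a \<Rightarrow> bool) \<Rightarrow> 'a set \<Rightarrow> bool" where
  "minimal_dominating_set V E S \<longleftrightarrow> dominating_set V E S \<and>
     (\<forall>T. T \<subset> S \<longrightarrow> \<not> dominating_set V E T)"

definition domination_number :: "'a set \<Rightarrow> ('a \<Rightarrow> 'a \<Rightarrow> bool) \<Rightarrow> nat" where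
  "domination_number V E = Min {card S | S. dominating_set V E S}"

definition upper_domination_number :: "'a set \<Rightarrow> ('a \<Rightarrow> 'a \<Rightarrow> bool) \<Rightarrow> nat" where
  "upper_domination_number V E = Max {card S | S. minimal_dominating_set V E S}"

definition dom_graph_verts :: "'a set \<Rightarrow> ('a \<Rightarrow> 'a \<Rightarrow> bool) \<Rightarrow> nat \<Rightarrow> 'a set set" where
  "dom_graph_verts V E k = {S. dominating_set V E S \<and> card S \<le> k}"

definition dom_graph_adj :: "'a set \<Rightarrow> ('a \<Rightarrow> 'a \<Rightarrow> bool) \<Rightarrow> nat \<Rightarrow> 'a set \<Rightarrow> 'a set \<Rightarrow> bool" where
  "dom_graph_adj V E k A B \<longleftrightarrow> A \<in> dom_graph_verts V E k \<and> B \<in> dom_graph_verts V E k \<and>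
     (\<exists>x. (A - B) \<union> (B - A) = {x})"

definition dom_graph_connected :: "'a set \<Rightarrow> ('a \<Rightarrow> 'a \<Rightarrow> bool) \<Rightarrow> nat \<Rightarrow> bool" where
  "dom_graph_connected V E k \<longleftrightarrow>
     (\<forall>A \<in> dom_graph_verts V E k. \<forall>B \<in> dom_graph_verts V E k. (dom_graph_adj V E k)\<^sup>*\<^sup>* A B)"

end

theory Submission
  imports Defs
begin

lemma dom_super:
  assumes "dominating_set V E A" "A \<subseteq> B" "B \<subseteq> V"
  shows "dominating_set V E B"
  using assms unfolding dominating_set_def by blast

lemma star_sym:
  assumes "(dom_graph_adj V E k)\<^sup>*\<^sup>* A B"
  shows "(dom_graph_adj V E k)\<^sup>*\<^sup>* B A"
  using assms
proof (induction rule: rtranclp_induct)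
  case base then show ?case by simp
next
  case (step y z)
  have "dom_graph_adj V E k z y" using step(2) unfolding dom_graph_adj_def by (auto simp: Un_commute)
  then show ?case using step(3) by (meson converse_rtranclp_into_rtranclp)
qed

lemma mono_path_aux:
  assumes fin: "finite V" and dA: "dominating_set V E A"
  shows "finite C \<Longrightarrow> C \<subseteq> V - A \<Longrightarrow> card (A \<union> C) \<le> k \<Longrightarrow> (dom_graph_adj V E k)\<^sup>*\<^sup>* A (A \<union> C)"
proof (induction C rule: finite_induct)
  case empty then show ?case by simp
next
  case (insert x C)
  have AV: "A \<subseteq> V" using dA unfolding dominating_set_def by auto
  have f1: "finite (A \<union> insert x C)" using insert AV fin by (meson finite_subset le_sup_iff Diff_subset subset_trans)
  have c1: "card (A \<union> C) \<le> k"
    using card_mono[OF f1, of "A \<union> C"] insert(5) by (simp add: subset_insertI2)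
  have IH: "(dom_graph_adj V E k)\<^sup>*\<^sup>* A (A \<union> C)" using insert c1 by auto
  have d1: "dominating_set V E (A \<union> C)" using dom_super[OF dA, of "A \<union> C"] insert AV by auto
  have d2: "dominating_set V E (A \<union> insert x C)" using dom_super[OF dA, of "A \<union> insert x C"] insert AV by auto
  have xn: "x \<notin> A \<union> C" using insert by auto
  have "dom_graph_adj V E k (A \<union> C) (A \<union> insert x C)"
    unfolding dom_graph_adj_def dom_graph_verts_def
    using d1 d2 c1 insert(5) xn by auto
  then show ?case using IH by (meson rtranclp.rtrancl_into_rtrancl)
qed

lemma mono_path:
  assumes "finite V" "dominating_set V E A" "A \<subseteq> B" "B \<subseteq> V" "card B \<le> k"
  shows "(dom_graph_adj V E k)\<^sup>*\<^sup>* A B"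
proof -
  have "finite (B - A)" using assms by (meson finite_Diff finite_subset)
  moreover have "B - A \<subseteq> V - A" using assms by auto
  moreover have "A \<union> (B - A) = B" using assms by auto
  ultimately show ?thesis using mono_path_aux[OF assms(1,2), of "B - A" k] assms(5) by auto
qed

lemma dom_remove:
  assumes "X \<subseteq> V" "\<forall>x\<in>X. \<exists>y\<in>V - X. E x y"
  shows "dominating_set V E (V - X)"
  using assms unfolding dominating_set_def by auto

lemma gamma_case:
  assumes G: "simple_graph V E"
    and kk: "k \<ge> upper_domination_number V E + domination_number V E"
  shows "dom_graph_connected V E k"
proof -
  let ?r = "dom_graph_adj V E k"
  have fin: "finite V" using G unfolding simple_graph_def by auto
  have Vd: "dominating_set V E V" unfolding dominating_set_def by auto
  have fD: "finite {card S | S. dominating_set V E S}"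
    by (rule finite_subset[of _ "{..card V}"]) (auto simp: dominating_set_def fin card_mono)
  have "Min {card S | S. dominating_set V E S} \<in> {card S | S. dominating_set V E S}"
    using Min_in[OF fD] Vd by blast
  then obtain D where dD: "dominating_set V E D" and cD: "card D = domination_number V E"
    unfolding domination_number_def by auto
  have fM: "finite {card S | S. minimal_dominating_set V E S}"
    by (rule finite_subset[of _ "{..card V}"]) (auto simp: minimal_dominating_set_def dominating_set_def fin card_mono)
  have toD: "?r\<^sup>*\<^sup>* A D" if A: "A \<in> dom_graph_verts V E k" for A
  proof -
    have dA: "dominating_set V E A" and cA: "card A \<le> k" using A unfolding dom_graph_verts_def by auto
    have AV: "A \<subseteq> V" using dA unfolding dominating_set_def by auto
    have "A \<subseteq> A \<and> dominating_set V E A" using dA by auto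
    from ex_has_least_nat[of "\<lambda>T. T \<subseteq> A \<and> dominating_set V E T" A card, OF this]
    obtain A' where A'1: "A' \<subseteq> A \<and> dominating_set V E A'"
      and A'2: "\<forall>T. T \<subseteq> A \<and> dominating_set V E T \<longrightarrow> card A' \<le> card T"
      by blast
    have finA: "finite A" using AV fin finite_subset by blast
    have "minimal_dominating_set V E A'"
      unfolding minimal_dominating_set_def
    proof (intro conjI allI impI)
      show "dominating_set V E A'" using A'1 by auto
      fix T assume T: "T \<subset> A'"
      have "card T < card A'" using T finA A'1 by (meson psubset_card_mono finite_subset)
      show "\<not> dominating_set V E T"
      proof
        assume "dominating_set V E T"
        with T A'1 have "T \<subseteq> A \<and> dominating_set V E T" by auto
        with A'2 have "card A' \<le> card T" by blast
        with \<open>card T < card A'\<close> show False by simp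
      qed
    qed
    then have cA': "card A' \<le> upper_domination_number V E"
      unfolding upper_domination_number_def using Max_ge[OF fM] by blast
    have DV: "D \<subseteq> V" using dD unfolding dominating_set_def by auto
    have A'V: "A' \<subseteq> V" using A'1 AV by auto
    have cU: "card (A' \<union> D) \<le> k" using card_Un_le[of A' D] cA' cD kk by linarith
    have p1: "?r\<^sup>*\<^sup>* A' A" using mono_path[OF fin _ _ AV cA, where A=A'] A'1 by auto
    have p2: "?r\<^sup>*\<^sup>* A' (A' \<union> D)" using mono_path[OF fin _ _ _ cU, where A=A'] A'1 A'V DV by auto
    have p3: "?r\<^sup>*\<^sup>* D (A' \<union> D)" using mono_path[OF fin dD _ _ cU] A'V DV by auto
    show ?thesis using star_sym[OF p1] p2 star_sym[OF p3] by (meson rtranclp_trans)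
  qed
  show ?thesis unfolding dom_graph_connected_def
  proof (intro ballI)
    fix A B assume "A \<in> dom_graph_verts V E k" "B \<in> dom_graph_verts V E k"
    then show "?r\<^sup>*\<^sup>* A B" using rtranclp_trans[OF toD star_sym[OF toD]] by blast
  qed
qed


lemma n1_case:
  assumes G: "simple_graph V E"
    and disj: "\<exists>a b c d. E a b \<and> E c d \<and> {a, b} \<inter> {c, d} = {}"
    and kk: "k \<ge> card V - 1"
  shows "dom_graph_connected V E k"
proof -
  let ?r = "dom_graph_adj V E k"
  have fin: "finite V" using G unfolding simple_graph_def by auto
  have Ep: "\<And>u v. E u v \<Longrightarrow> u \<in> V \<and> v \<in> V \<and> u \<noteq> v \<and> E v u"
    using G unfolding simple_graph_def by blast
  show ?thesis
  proof (cases "card V \<le> k")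
    case True
    show ?thesis unfolding dom_graph_connected_def
    proof (intro ballI)
      fix A B assume A: "A \<in> dom_graph_verts V E k" and B: "B \<in> dom_graph_verts V E k"
      have "?r\<^sup>*\<^sup>* X V" if "X \<in> dom_graph_verts V E k" for X
        using that mono_path[OF fin _ _ _ True, of E X] unfolding dom_graph_verts_def dominating_set_def
        by auto
      then show "?r\<^sup>*\<^sup>* A B" using A B star_sym by (meson rtranclp_trans)
    qed
  next
    case False
    obtain a b c d where ab: "E a b" and cd: "E c d" and abcd: "{a, b} \<inter> {c, d} = {}"
      using disj by blast
    have cm1: "card (V - {u}) \<le> k" if "u \<in> V" for u
      using that fin kk by (simp add: card_Diff_singleton)
    have key: "?r\<^sup>*\<^sup>* (V - {x}) (V - {z})"
      if xz: "E x z" and only: "\<forall>y. E x y \<longrightarrow> y = z" for x z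
    proof -
      have ba: "E b a" and dc: "E d c" using Ep ab cd by auto
      obtain w y where wy: "E w y" and wn: "w \<notin> {x, z}" and yn: "y \<notin> {x, z}"
      proof (cases "{a, b} \<inter> {x, z} = {}")
        case True then show ?thesis using that ab by blast
      next
        case F1: False
        show ?thesis
        proof (cases "{c, d} \<inter> {x, z} = {}")
          case True then show ?thesis using that cd by blast
        next
          case False
          have False using F1 False abcd only ab ba cd dc by auto
          then show ?thesis by simp
        qed
      qed
      have w: "w \<in> V" "y \<in> V" "w \<noteq> y" using Ep[OF wy] by auto
      have x: "x \<in> V" "z \<in> V" "x \<noteq> z" "E z x" using Ep[OF xz] by auto
      have d1: "dominating_set V E (V - {x, w})"
        by (rule dom_remove) (use w x wn yn wy xz in auto)
      have d2: "dominating_set V E (V - {w, z})"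
        by (rule dom_remove) (use w x wn yn wy xz in auto)
      have p1: "?r\<^sup>*\<^sup>* (V - {x, w}) (V - {x})" using mono_path[OF fin d1 _ _ cm1[OF x(1)]] by auto
      have p2: "?r\<^sup>*\<^sup>* (V - {x, w}) (V - {w})" using mono_path[OF fin d1 _ _ cm1[OF w(1)]] by auto
      have p3: "?r\<^sup>*\<^sup>* (V - {w, z}) (V - {w})" using mono_path[OF fin d2 _ _ cm1[OF w(1)]] by auto
      have p4: "?r\<^sup>*\<^sup>* (V - {w, z}) (V - {z})" using mono_path[OF fin d2 _ _ cm1[OF x(2)]] by auto
      show ?thesis using star_sym[OF p1] p2 star_sym[OF p3] p4 by (meson rtranclp_trans)
    qed
    have pair: "?r\<^sup>*\<^sup>* (V - {u}) (V - {v})" if uu: "E u u'" and vv: "E v v'" for u u' v v'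
    proof -
      have u: "u \<in> V" and v: "v \<in> V" using Ep uu vv by auto
      show ?thesis
      proof (cases "u = v")
        case True then show ?thesis by simp
      next
        case neq: False
        show ?thesis
        proof (cases "\<forall>x\<in>{u,v}. \<exists>y\<in>V - {u,v}. E x y")
          case True
          have d: "dominating_set V E (V - {u, v})" by (rule dom_remove) (use u v True in auto)
          have p1: "?r\<^sup>*\<^sup>* (V - {u, v}) (V - {u})" using mono_path[OF fin d _ _ cm1[OF u]] by auto
          have p2: "?r\<^sup>*\<^sup>* (V - {u, v}) (V - {v})" using mono_path[OF fin d _ _ cm1[OF v]] by auto
          show ?thesis using star_sym[OF p1] p2 by (meson rtranclp_trans)
        next
          case False
          then obtain x where x: "x \<in> {u, v}" and nx: "\<forall>y\<in>V - {u, v}. \<not> E x y" by blast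
          show ?thesis
          proof (cases "x = u")
            case True
            have only: "\<forall>y. E u y \<longrightarrow> y = v" using nx True Ep by blast
            then have "E u v" using uu by auto
            then show ?thesis using key only by blast
          next
            case False
            then have xv: "x = v" using x by auto
            have only: "\<forall>y. E v y \<longrightarrow> y = u" using nx xv Ep by blast
            then have "E v u" using vv by auto
            then show ?thesis using key[of v u] only star_sym by blast
          qed
        qed
      qed
    qed
    have toT: "?r\<^sup>*\<^sup>* A (V - {a})" if A: "A \<in> dom_graph_verts V E k" for A
    proof -
      have dA: "dominating_set V E A" and cA: "card A \<le> k" using A unfolding dom_graph_verts_def by auto
      have AV: "A \<subseteq> V" using dA unfolding dominating_set_def by auto
      have "A \<noteq> V" using cA False by auto
      then obtain v where v: "v \<in> V" "v \<notin> A" using AV by blast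
      have dv: "dominating_set V E (V - {v})" using dom_super[OF dA, of "V - {v}"] AV v by blast
      then obtain v' where "E v v'" using v unfolding dominating_set_def by blast
      have p1: "?r\<^sup>*\<^sup>* A (V - {v})" using mono_path[OF fin dA _ _ cm1[OF v(1)]] AV v by auto
      have p2: "?r\<^sup>*\<^sup>* (V - {v}) (V - {a})" using pair[OF \<open>E v v'\<close> ab] .
      show ?thesis using p1 p2 by (meson rtranclp_trans)
    qed
    show ?thesis unfolding dom_graph_connected_def
    proof (intro ballI)
      fix A B assume "A \<in> dom_graph_verts V E k" "B \<in> dom_graph_verts V E k"
      then show "?r\<^sup>*\<^sup>* A B" using rtranclp_trans[OF toT star_sym[OF toT]] by blast
    qed
  qed
qed

theorem theorem5:
  fixes V :: "'a set" and E :: "'a \<Rightarrow> 'a \<Rightarrow> bool" and k :: nat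
  assumes "simple_graph V E"
    and "\<exists>a b c d. E a b \<and> E c d \<and> {a, b} \<inter> {c, d} = {}"
    and "k \<ge> min (card V - 1) (upper_domination_number V E + domination_number V E)"
  shows "dom_graph_connected V E k"
proof (cases "card V - 1 \<le> upper_domination_number V E + domination_number V E")
  case True
  then show ?thesis using n1_case[OF assms(1,2)] assms(3) by (simp add: min_def)
next
  case False
  then show ?thesis using gamma_case[OF assms(1)] assms(3) by (simp add: min_def)
qed

end
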